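(* Let a liquidity provider have a concave, increasing utility $U_P$ over terminal wealth, initial reserves $x_0$ of numeraire and $y_0$ of a yield token which pays a random amount $Y$ at maturity (expectations taken under her belief distribution for $Y$). Define $$p^S(\Delta)=\sup\{p\ge 0:\ \mathbb{E}[U_P(x_0+y_0Y)]\le \mathbb{E}[U_P(x_0+y_0Y+\Delta(Y-p))]\},$$ $$p^B(\Delta)=\inf\{p\ge 0:\ \mathbb{E}[U_P(x_0+y_0Y)]\le \mathbb{E}[U_P(x_0+y_0Y+\Delta(p-Y))]\},$$ $$\psi_S(x_0,y_0)=\{(x,y):\ y=y_0+\Delta,\ x=x_0-\Delta p^S(\Delta),\ \Delta\ge 0\},$$ $$\psi_B(x_0,y_0)=\{(x,y):\ y=y_0-\Delta,\ x=x_0+\Delta p^B(\Delta),\ \Delta\ge 0\}.$$ Then the curve $\psi(x_0,y_0,U_P,Y)=\psi_S\cup\psi_B$ is the optimally efficient bonding curve for the liquidity provider: for every point $(x,y)\in\psi$, $\mathbb{E}[U_P(x+yY)]=\mathbb{E}[U_P(x_0+y_0Y)]$.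
   Context: A bonding curve constrains the reserves $(x,y)$ of an automated market maker (numeraire and yield token) reachable by trades. It is called optimally efficient for the liquidity provider if the liquidity provider's expected utility of terminal wealth $x+yY$ does not change when a trader moves the reserves along the curve. *)

theory Defs
  imports "HOL-Probability.Probability"
begin

definition EU :: "'w measure \<Rightarrow> (real \<Rightarrow> real) \<Rightarrow> ('w \<Rightarrow> real) \<Rightarrow> real \<Rightarrow> real \<Rightarrow> real" where
  "EU M U Y x y = (\<integral>\<omega>. U (x + y * Y \<omega>) \<partial>M)"

definition pS :: "'w measure \<Rightarrow> (real \<Rightarrow> real) \<Rightarrow> ('w \<Rightarrow> real) \<Rightarrow> real \<Rightarrow> real \<Rightarrow> real \<Rightarrow> real" where
  "pS M U Y x0 y0 \<Delta> = Sup {p. p \<ge> 0 \<and>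
     EU M U Y x0 y0 \<le> (\<integral>\<omega>. U (x0 + y0 * Y \<omega> + \<Delta> * (Y \<omega> - p)) \<partial>M)}"

definition pB :: "'w measure \<Rightarrow> (real \<Rightarrow> real) \<Rightarrow> ('w \<Rightarrow> real) \<Rightarrow> real \<Rightarrow> real \<Rightarrow> real \<Rightarrow> real" where
  "pB M U Y x0 y0 \<Delta> = Inf {p. p \<ge> 0 \<and>
     EU M U Y x0 y0 \<le> (\<integral>\<omega>. U (x0 + y0 * Y \<omega> + \<Delta> * (p - Y \<omega>)) \<partial>M)}"

definition psiS :: "'w measure \<Rightarrow> (real \<Rightarrow> real) \<Rightarrow> ('w \<Rightarrow> real) \<Rightarrow> real \<Rightarrow> real \<Rightarrow> (real \<times> real) set" where
  "psiS M U Y x0 y0 = {(x, y). \<exists>\<Delta>\<ge>0. y = y0 + \<Delta> \<and> x = x0 - \<Delta> * pS M U Y x0 y0 \<Delta>}"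

definition psiB :: "'w measure \<Rightarrow> (real \<Rightarrow> real) \<Rightarrow> ('w \<Rightarrow> real) \<Rightarrow> real \<Rightarrow> real \<Rightarrow> (real \<times> real) set" where
  "psiB M U Y x0 y0 = {(x, y). \<exists>\<Delta>\<ge>0. y = y0 - \<Delta> \<and> x = x0 + \<Delta> * pB M U Y x0 y0 \<Delta>}"

definition psi :: "'w measure \<Rightarrow> (real \<Rightarrow> real) \<Rightarrow> ('w \<Rightarrow> real) \<Rightarrow> real \<Rightarrow> real \<Rightarrow> (real \<times> real) set" where
  "psi M U Y x0 y0 = psiS M U Y x0 y0 \<union> psiB M U Y x0 y0"

definition optimally_efficient :: "'w measure \<Rightarrow> (real \<Rightarrow> real) \<Rightarrow> ('w \<Rightarrow> real) \<Rightarrow> (real \<times> real) set \<Rightarrow> bool" where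
  "optimally_efficient M U Y C \<longleftrightarrow>
     (\<forall>(x, y)\<in>C. \<forall>(x', y')\<in>C. EU M U Y x y = EU M U Y x' y')"

end

theory Submission
  imports Defs
begin

locale amm_setup =
  fixes M :: "'w measure" and U :: "real \<Rightarrow> real" and Y :: "'w \<Rightarrow> real"
  assumes P: "prob_space M"
    and Ym: "Y \<in> borel_measurable M"
    and Ypos: "AE \<omega> in M. Y \<omega> \<ge> 0"
    and conc: "concave_on UNIV U"
    and smono: "strict_mono U"
    and integ: "\<And>a b. integrable M (\<lambda>\<omega>. U (a + b * Y \<omega>))"
begin

abbreviation F where "F a b \<equiv> EU M U Y a b"

lemma Umono: "a \<le> b \<Longrightarrow> U a \<le> U b"
  using smono by (simp add: strict_mono_less_eq)

lemma Uless: "a < b \<Longrightarrow> U a < U b"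
  using smono by (simp add: strict_mono_less)

lemma F_strict: assumes "a < a'" shows "F a b < F a' b"
proof -
  define d where "d = (\<lambda>\<omega>. U (a' + b * Y \<omega>) - U (a + b * Y \<omega>))"
  have dint: "integrable M d" unfolding d_def using integ by auto
  have dpos: "\<And>\<omega>. d \<omega> > 0" unfolding d_def using assms Uless by auto
  have i: "integral\<^sup>L M d = F a' b - F a b"
    unfolding d_def EU_def using integ by simp
  have "integral\<^sup>L M d \<ge> 0" using dpos by (simp add: integral_nonneg less_imp_le)
  moreover have "integral\<^sup>L M d \<noteq> 0"
  proof
    assume "integral\<^sup>L M d = 0"
    then have "AE \<omega> in M. d \<omega> = 0"
      using integral_nonneg_eq_0_iff_AE[OF dint] dpos by (simp add: less_imp_le)
    then have "AE \<omega> in M. False"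
    proof (rule AE_mp, intro AE_I2 impI)
      fix \<omega> assume "d \<omega> = 0" then show False using dpos[of \<omega>] by simp
    qed
    then show False using P by (simp add: prob_space.AE_False)
  qed
  ultimately show ?thesis using i by linarith
qed

lemma F_mono: "a \<le> a' \<Longrightarrow> F a b \<le> F a' b"
  using F_strict by (cases "a = a'") (auto simp: less_imp_le order_le_less)

lemma F_mono_b: assumes "b \<le> b'" shows "F a b \<le> F a b'"
  unfolding EU_def
proof (rule integral_mono_AE[OF integ integ])
  show "AE \<omega> in M. U (a + b * Y \<omega>) \<le> U (a + b' * Y \<omega>)"
    using Ypos
  proof (rule AE_mp, intro AE_I2 impI)
    fix \<omega> assume "0 \<le> Y \<omega>"
    then have "b * Y \<omega> \<le> b' * Y \<omega>" using assms by (simp add: mult_right_mono)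
    then show "U (a + b * Y \<omega>) \<le> U (a + b' * Y \<omega>)" by (intro Umono) simp
  qed
qed

lemma F_concave: "concave_on UNIV (\<lambda>a. F a b)"
  unfolding concave_on_iff
proof (intro conjI ballI allI impI)
  show "convex (UNIV :: real set)" by simp
  fix x y u v :: real assume uv: "0 \<le> u" "0 \<le> v" "u + v = 1"
  have "u * F x b + v * F y b = (\<integral>\<omega>. u * U (x + b * Y \<omega>) + v * U (y + b * Y \<omega>) \<partial>M)"
    unfolding EU_def using integ by simp
  also have "\<dots> \<le> F (u *\<^sub>R x + v *\<^sub>R y) b"
    unfolding EU_def
  proof (rule integral_mono)
    show "integrable M (\<lambda>\<omega>. u * U (x + b * Y \<omega>) + v * U (y + b * Y \<omega>))" using integ by simp
    show "integrable M (\<lambda>\<omega>. U (u *\<^sub>R x + v *\<^sub>R y + b * Y \<omega>))" using integ by simp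
    fix \<omega>
    have "u * U (x + b * Y \<omega>) + v * U (y + b * Y \<omega>) \<le> U (u *\<^sub>R (x + b * Y \<omega>) + v *\<^sub>R (y + b * Y \<omega>))"
      using conc uv unfolding concave_on_iff by blast
    also have "u *\<^sub>R (x + b * Y \<omega>) + v *\<^sub>R (y + b * Y \<omega>) = u *\<^sub>R x + v *\<^sub>R y + b * Y \<omega>"
      using uv by (simp add: algebra_simps) (metis distrib_right mult_1 mult.commute)
    finally show "u * U (x + b * Y \<omega>) + v * U (y + b * Y \<omega>) \<le> U (u *\<^sub>R x + v *\<^sub>R y + b * Y \<omega>)" .
  qed
  finally show "u * F x b + v * F y b \<le> F (u *\<^sub>R x + v *\<^sub>R y) b" .
qed

lemma F_cont: "isCont (\<lambda>a. F a b) a"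
proof -
  have "convex_on UNIV (\<lambda>a. - F a b)" using F_concave by (simp add: concave_on_def)
  then have "continuous_on UNIV (\<lambda>a. - F a b)" by (rule convex_on_continuous[OF open_UNIV])
  then have "continuous_on UNIV (\<lambda>a. - (- F a b))" by (rule continuous_on_minus)
  then show ?thesis by (simp add: continuous_on_eq_continuous_at)
qed


lemma buy_exists: assumes D: "\<Delta> > 0" shows "\<exists>n::nat. F (x0 + \<Delta> * real n) (y0 - \<Delta>) > F x0 y0"
proof -
  define s where "s = (\<lambda>(n::nat) \<omega>. min (U (x0 + \<Delta> * real n + (y0 - \<Delta>) * Y \<omega>)) (U ((x0 + 1) + y0 * Y \<omega>)))"
  define g where "g = (\<lambda>\<omega>. U ((x0 + 1) + y0 * Y \<omega>))"
  define w where "w = (\<lambda>\<omega>. \<bar>U (x0 + (y0 - \<Delta>) * Y \<omega>)\<bar> + \<bar>U ((x0 + 1) + y0 * Y \<omega>)\<bar>)"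
  have sm: "\<And>n. s n \<in> borel_measurable M"
    unfolding s_def using integ by (intro borel_measurable_min) (auto intro: borel_measurable_integrable)
  have gm: "g \<in> borel_measurable M" unfolding g_def using integ by (auto intro: borel_measurable_integrable)
  have wi: "integrable M w" unfolding w_def by (intro Bochner_Integration.integrable_add integrable_abs integ)
  have lim: "AE \<omega> in M. (\<lambda>n. s n \<omega>) \<longlonglongrightarrow> g \<omega>"
  proof (intro AE_I2 tendsto_eventually)
    fix \<omega>
    show "\<forall>\<^sub>F n in sequentially. s n \<omega> = g \<omega>"
      unfolding eventually_sequentially
    proof (intro exI allI impI)
      fix n assume "nat \<lceil>Y \<omega> + 1 / \<Delta>\<rceil> \<le> n"
      then have "Y \<omega> + 1 / \<Delta> \<le> real n" by linarith
      then have "\<Delta> * (Y \<omega> + 1 / \<Delta>) \<le> \<Delta> * real n" using D by (simp add: mult_left_mono)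
      then have "\<Delta> * Y \<omega> + 1 \<le> \<Delta> * real n" using D by (simp add: algebra_simps)
      then have "(x0 + 1) + y0 * Y \<omega> \<le> x0 + \<Delta> * real n + (y0 - \<Delta>) * Y \<omega>" by (simp add: algebra_simps)
      then have "U ((x0 + 1) + y0 * Y \<omega>) \<le> U (x0 + \<Delta> * real n + (y0 - \<Delta>) * Y \<omega>)" by (rule Umono)
      then show "s n \<omega> = g \<omega>" unfolding s_def g_def by (simp add: min_absorb2)
    qed
  qed
  have bound: "\<And>n. AE \<omega> in M. norm (s n \<omega>) \<le> w \<omega>"
  proof (intro AE_I2)
    fix n \<omega>
    have "x0 + (y0 - \<Delta>) * Y \<omega> \<le> x0 + \<Delta> * real n + (y0 - \<Delta>) * Y \<omega>" using D by simp
    then have "U (x0 + (y0 - \<Delta>) * Y \<omega>) \<le> U (x0 + \<Delta> * real n + (y0 - \<Delta>) * Y \<omega>)" by (rule Umono)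
    then show "norm (s n \<omega>) \<le> w \<omega>" unfolding s_def w_def by (auto simp: min_def abs_if)
  qed
  have si: "\<And>n. integrable M (s n)"
    by (rule integrable_dominated_convergence2[OF gm sm wi lim bound])
  have tl: "(\<lambda>n. integral\<^sup>L M (s n)) \<longlonglongrightarrow> integral\<^sup>L M g"
    by (rule integral_dominated_convergence[OF gm sm wi lim bound])
  have "integral\<^sup>L M g = F (x0 + 1) y0" unfolding g_def EU_def ..
  moreover have "F x0 y0 < F (x0 + 1) y0" by (rule F_strict) simp
  ultimately have "\<forall>\<^sub>F n in sequentially. F x0 y0 < integral\<^sup>L M (s n)"
    using tl by (simp add: order_tendstoD(1))
  then obtain n where n: "F x0 y0 < integral\<^sup>L M (s n)" by (meson eventually_sequentially order_refl)
  have "integral\<^sup>L M (s n) \<le> F (x0 + \<Delta> * real n) (y0 - \<Delta>)"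
    unfolding EU_def using si integ by (intro integral_mono) (auto simp: s_def)
  with n show ?thesis by (intro exI[of _ n]) linarith
qed

lemma sell_exists: assumes D: "\<Delta> > 0" shows "\<exists>n::nat. F (x0 - \<Delta> * real n) (y0 + \<Delta>) < F x0 y0"
proof -
  define s where "s = (\<lambda>(n::nat) \<omega>. max (U (x0 - \<Delta> * real n + (y0 + \<Delta>) * Y \<omega>)) (U ((x0 - 1) + y0 * Y \<omega>)))"
  define g where "g = (\<lambda>\<omega>. U ((x0 - 1) + y0 * Y \<omega>))"
  define w where "w = (\<lambda>\<omega>. \<bar>U (x0 + (y0 + \<Delta>) * Y \<omega>)\<bar> + \<bar>U ((x0 - 1) + y0 * Y \<omega>)\<bar>)"
  have sm: "\<And>n. s n \<in> borel_measurable M"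
    unfolding s_def using integ by (intro borel_measurable_max) (auto intro: borel_measurable_integrable)
  have gm: "g \<in> borel_measurable M" unfolding g_def using integ by (auto intro: borel_measurable_integrable)
  have wi: "integrable M w" unfolding w_def by (intro Bochner_Integration.integrable_add integrable_abs integ)
  have lim: "AE \<omega> in M. (\<lambda>n. s n \<omega>) \<longlonglongrightarrow> g \<omega>"
  proof (intro AE_I2 tendsto_eventually)
    fix \<omega>
    show "\<forall>\<^sub>F n in sequentially. s n \<omega> = g \<omega>"
      unfolding eventually_sequentially
    proof (intro exI allI impI)
      fix n assume "nat \<lceil>Y \<omega> + 1 / \<Delta>\<rceil> \<le> n"
      then have "Y \<omega> + 1 / \<Delta> \<le> real n" by linarith
      then have "\<Delta> * (Y \<omega> + 1 / \<Delta>) \<le> \<Delta> * real n" using D by (simp add: mult_left_mono)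
      then have "\<Delta> * Y \<omega> + 1 \<le> \<Delta> * real n" using D by (simp add: algebra_simps)
      then have "x0 - \<Delta> * real n + (y0 + \<Delta>) * Y \<omega> \<le> (x0 - 1) + y0 * Y \<omega>" by (simp add: algebra_simps)
      then have "U (x0 - \<Delta> * real n + (y0 + \<Delta>) * Y \<omega>) \<le> U ((x0 - 1) + y0 * Y \<omega>)" by (rule Umono)
      then show "s n \<omega> = g \<omega>" unfolding s_def g_def by (simp add: max_absorb2)
    qed
  qed
  have bound: "\<And>n. AE \<omega> in M. norm (s n \<omega>) \<le> w \<omega>"
  proof (intro AE_I2)
    fix n \<omega>
    have "x0 - \<Delta> * real n + (y0 + \<Delta>) * Y \<omega> \<le> x0 + (y0 + \<Delta>) * Y \<omega>" using D by simp
    then have "U (x0 - \<Delta> * real n + (y0 + \<Delta>) * Y \<omega>) \<le> U (x0 + (y0 + \<Delta>) * Y \<omega>)" by (rule Umono)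
    then show "norm (s n \<omega>) \<le> w \<omega>" unfolding s_def w_def by (auto simp: max_def abs_if)
  qed
  have si: "\<And>n. integrable M (s n)"
    by (rule integrable_dominated_convergence2[OF gm sm wi lim bound])
  have tl: "(\<lambda>n. integral\<^sup>L M (s n)) \<longlonglongrightarrow> integral\<^sup>L M g"
    by (rule integral_dominated_convergence[OF gm sm wi lim bound])
  have "integral\<^sup>L M g = F (x0 - 1) y0" unfolding g_def EU_def ..
  moreover have "F (x0 - 1) y0 < F x0 y0" by (rule F_strict) simp
  ultimately have "\<forall>\<^sub>F n in sequentially. integral\<^sup>L M (s n) < F x0 y0"
    using tl by (simp add: order_tendstoD(2))
  then obtain n where n: "integral\<^sup>L M (s n) < F x0 y0" by (meson eventually_sequentially order_refl)
  have "F (x0 - \<Delta> * real n) (y0 + \<Delta>) \<le> integral\<^sup>L M (s n)"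
    unfolding EU_def using si integ by (intro integral_mono) (auto simp: s_def)
  with n show ?thesis by (intro exI[of _ n]) linarith
qed


lemma sell_point: assumes D0: "\<Delta> \<ge> 0" shows "F (x0 - \<Delta> * pS M U Y x0 y0 \<Delta>) (y0 + \<Delta>) = F x0 y0"
proof (cases "\<Delta> = 0")
  case True then show ?thesis by simp
next
  case False
  with D0 have D: "\<Delta> > 0" by simp
  define \<phi> where "\<phi> = (\<lambda>p. F (x0 - \<Delta> * p) (y0 + \<Delta>))"
  obtain n :: nat where n: "\<phi> (real n) < F x0 y0" using sell_exists[OF D] unfolding \<phi>_def by blast
  have "\<phi> 0 \<ge> F x0 y0" unfolding \<phi>_def using F_mono_b[of y0 "y0 + \<Delta>" x0] D by simp
  moreover have "\<forall>x. 0 \<le> x \<and> x \<le> real n \<longrightarrow> isCont \<phi> x"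
    unfolding \<phi>_def by (intro allI impI isCont_o2[OF _ F_cont]) (intro continuous_intros)
  ultimately obtain q where q: "0 \<le> q" "q \<le> real n" "\<phi> q = F x0 y0"
    using IVT2[of \<phi> "real n" "F x0 y0" 0] n by auto
  have eq: "\<And>p. (\<integral>\<omega>. U (x0 + y0 * Y \<omega> + \<Delta> * (Y \<omega> - p)) \<partial>M) = \<phi> p"
    unfolding \<phi>_def EU_def by (intro Bochner_Integration.integral_cong refl arg_cong[where f=U]) (simp add: algebra_simps)
  have "{p. p \<ge> 0 \<and> EU M U Y x0 y0 \<le> (\<integral>\<omega>. U (x0 + y0 * Y \<omega> + \<Delta> * (Y \<omega> - p)) \<partial>M)} = {0..q}"
  proof -
    have "\<And>p. p \<ge> 0 \<Longrightarrow> (F x0 y0 \<le> \<phi> p \<longleftrightarrow> p \<le> q)"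
    proof
      fix p assume p: "0 \<le> p" "F x0 y0 \<le> \<phi> p"
      show "p \<le> q"
      proof (rule ccontr)
        assume "\<not> p \<le> q"
        then have "\<phi> p < \<phi> q" unfolding \<phi>_def using D by (intro F_strict) simp
        with p q show False by simp
      qed
    next
      fix p assume "p \<le> q"
      then have "\<phi> q \<le> \<phi> p" unfolding \<phi>_def using D by (intro F_mono) (simp add: mult_left_mono)
      with q show "F x0 y0 \<le> \<phi> p" by simp
    qed
    then show ?thesis unfolding eq using q by auto
  qed
  then have "pS M U Y x0 y0 \<Delta> = q" unfolding pS_def using q by simp
  with q show ?thesis unfolding \<phi>_def by simp
qed

lemma buy_point: assumes D0: "\<Delta> \<ge> 0" shows "F (x0 + \<Delta> * pB M U Y x0 y0 \<Delta>) (y0 - \<Delta>) = F x0 y0"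
proof (cases "\<Delta> = 0")
  case True then show ?thesis by simp
next
  case False
  with D0 have D: "\<Delta> > 0" by simp
  define \<phi> where "\<phi> = (\<lambda>p. F (x0 + \<Delta> * p) (y0 - \<Delta>))"
  obtain n :: nat where n: "\<phi> (real n) > F x0 y0" using buy_exists[OF D] unfolding \<phi>_def by blast
  have "\<phi> 0 \<le> F x0 y0" unfolding \<phi>_def using F_mono_b[of "y0 - \<Delta>" y0 x0] D by simp
  moreover have "\<forall>x. 0 \<le> x \<and> x \<le> real n \<longrightarrow> isCont \<phi> x"
    unfolding \<phi>_def by (intro allI impI isCont_o2[OF _ F_cont]) (intro continuous_intros)
  ultimately obtain q where q: "0 \<le> q" "q \<le> real n" "\<phi> q = F x0 y0"
    using IVT[of \<phi> 0 "F x0 y0" "real n"] n by auto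
  have eq: "\<And>p. (\<integral>\<omega>. U (x0 + y0 * Y \<omega> + \<Delta> * (p - Y \<omega>)) \<partial>M) = \<phi> p"
    unfolding \<phi>_def EU_def by (intro Bochner_Integration.integral_cong refl arg_cong[where f=U]) (simp add: algebra_simps)
  have "{p. p \<ge> 0 \<and> EU M U Y x0 y0 \<le> (\<integral>\<omega>. U (x0 + y0 * Y \<omega> + \<Delta> * (p - Y \<omega>)) \<partial>M)} = {q..}"
  proof -
    have "\<And>p. (F x0 y0 \<le> \<phi> p \<longleftrightarrow> q \<le> p)"
    proof
      fix p assume p: "F x0 y0 \<le> \<phi> p"
      show "q \<le> p"
      proof (rule ccontr)
        assume "\<not> q \<le> p"
        then have "\<phi> p < \<phi> q" unfolding \<phi>_def using D by (intro F_strict) simp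
        with p q show False by simp
      qed
    next
      fix p assume "q \<le> p"
      then have "\<phi> q \<le> \<phi> p" unfolding \<phi>_def using D by (intro F_mono) (simp add: mult_left_mono)
      with q show "F x0 y0 \<le> \<phi> p" by simp
    qed
    then show ?thesis unfolding eq using q by auto
  qed
  then have "pB M U Y x0 y0 \<Delta> = q" unfolding pB_def by simp
  with q show ?thesis unfolding \<phi>_def by simp
qed

end

theorem theorem16:
  fixes M :: "'w measure" and U :: "real \<Rightarrow> real" and Y :: "'w \<Rightarrow> real"
    and x0 y0 :: real
  assumes "prob_space M"
    and "Y \<in> borel_measurable M"
    and "AE \<omega> in M. Y \<omega> \<ge> 0"
    and "concave_on UNIV U"
    and "strict_mono U"
    and "\<And>a b. integrable M (\<lambda>\<omega>. U (a + b * Y \<omega>))"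
  shows "(\<forall>(x, y)\<in>psi M U Y x0 y0. EU M U Y x y = EU M U Y x0 y0)
         \<and> optimally_efficient M U Y (psi M U Y x0 y0)"
proof -
  interpret amm_setup M U Y using assms unfolding amm_setup_def by blast
  have A: "\<forall>(x, y)\<in>psi M U Y x0 y0. EU M U Y x y = EU M U Y x0 y0"
    unfolding psi_def psiS_def psiB_def using sell_point buy_point by auto
  moreover have "optimally_efficient M U Y (psi M U Y x0 y0)"
    unfolding optimally_efficient_def
  proof (intro ballI, clarify)
    fix a b c d assume "(a, b) \<in> psi M U Y x0 y0" "(c, d) \<in> psi M U Y x0 y0"
    then have "F a b = F x0 y0" "F c d = F x0 y0" using A by auto
    then show "F a b = F c d" by simp
  qed
  ultimately show ?thesis by blast
qed

end
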